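(* Let $m\ge 2$ and $n\ge1$ be integers, $0<\delta\le 10^{-6}$, $A=(n+1)^{n+1}n^{-n}$, $f(t)=(At^n(1-t))^m$ on $[0,1]$, and $B=\frac{n}{n+1}$. For $0\le k\le m$ put \[F(k,m,\delta)=\frac{1}{\|f\|_1}\int_0^1(1+\delta t)^{1+k}|f^{(k)}(t)|\,dt,\] where $\|f\|_1=\int_0^1|f(t)|dt$ and $\|f^{(m)}\|_2=\left(\int_0^1|f^{(m)}(t)|^2dt\right)^{1/2}$. Define \[\lambda_0(m,n,\delta)=\frac{2(B^n-B^{n+1})^m(mn+m+1)!}{m!\,(mn)!},\qquad \lambda_1(m,n,\delta)=(1+\delta)^2\frac{2(B^n-B^{n+1})^m(mn+m+1)!}{m!\,(mn)!},\] \[\lambda(m,n,\delta)=\sqrt{\frac{(1+\delta)^{2m+3}-1}{\delta(2m+3)}}\;\frac{(mn+m+1)!}{A^m\,m!\,(mn)!}\,\|f^{(m)}\|_2.\] Then $1\le F(0,m,\delta)\le 1+\delta$, $\lambda_0(m,n,\delta)\le F(1,m,\delta)\le\lambda_1(m,n,\delta)$, and $F(m,m,\delta)\le\lambda(m,n,\delta)$. *)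

theory Defs
  imports "HOL-Analysis.Analysis"
begin

definition constA :: "nat \<Rightarrow> real" where
  "constA n = real (n + 1) ^ (n + 1) / real n ^ n"

definition constB :: "nat \<Rightarrow> real" where
  "constB n = real n / real (n + 1)"

definition fpoly :: "nat \<Rightarrow> nat \<Rightarrow> real \<Rightarrow> real" where
  "fpoly m n t = (constA n * t ^ n * (1 - t)) ^ m"

definition norm1_f :: "nat \<Rightarrow> nat \<Rightarrow> real" where
  "norm1_f m n = integral {0..1} (\<lambda>t. \<bar>fpoly m n t\<bar>)"

definition norm2_fm :: "nat \<Rightarrow> nat \<Rightarrow> real" where
  "norm2_fm m n = sqrt (integral {0..1} (\<lambda>t. \<bar>(deriv ^^ m) (fpoly m n) t\<bar> ^ 2))"

definition Fk :: "nat \<Rightarrow> nat \<Rightarrow> nat \<Rightarrow> real \<Rightarrow> real" where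
  "Fk k m n \<delta> = (1 / norm1_f m n) *
     integral {0..1} (\<lambda>t. (1 + \<delta> * t) ^ (1 + k) * \<bar>(deriv ^^ k) (fpoly m n) t\<bar>)"

definition lambda0 :: "nat \<Rightarrow> nat \<Rightarrow> real \<Rightarrow> real" where
  "lambda0 m n \<delta> = 2 * (constB n ^ n - constB n ^ (n + 1)) ^ m * fact (m * n + m + 1)
       / (fact m * fact (m * n))"

definition lambda1 :: "nat \<Rightarrow> nat \<Rightarrow> real \<Rightarrow> real" where
  "lambda1 m n \<delta> = (1 + \<delta>) ^ 2 * (2 * (constB n ^ n - constB n ^ (n + 1)) ^ m
       * fact (m * n + m + 1) / (fact m * fact (m * n)))"

definition lambdaM :: "nat \<Rightarrow> nat \<Rightarrow> real \<Rightarrow> real" where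
  "lambdaM m n \<delta> = sqrt (((1 + \<delta>) ^ (2 * m + 3) - 1) / (\<delta> * real (2 * m + 3)))
       * (fact (m * n + m + 1) / (constA n ^ m * fact m * fact (m * n))) * norm2_fm m n"

end

theory Submission
  imports Defs "HOL-Computational_Algebra.Polynomial"
begin

lemma powr_nat_eq: "(t::real) \<ge> 0 \<Longrightarrow> k > 0 \<Longrightarrow> t powr real k = t ^ k"
  by (cases "t = 0") (auto simp: powr_realpow)

lemma beta_int:
  assumes "k > 0" "l > 0"
  shows "((\<lambda>t::real. t ^ k * (1 - t) ^ l) has_integral
           (fact k * fact l / fact (k + l + 1))) {0..1}"
proof -
  have "((\<lambda>t. t powr (real (k+1) - 1) * (1 - t) powr (real (l+1) - 1)) has_integral
          Beta (real (k+1)) (real (l+1))) {0..1}"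
    by (rule has_integral_Beta_real) auto
  moreover have "Beta (real (k+1)) (real (l+1)) = fact k * fact l / fact (k + l + 1)"
  proof -
    have "Gamma (real (k+1)) = fact k" using Gamma_fact[of k] by (simp add: add.commute)
    moreover have "Gamma (real (l+1)) = fact l" using Gamma_fact[of l] by (simp add: add.commute)
    moreover have "Gamma (real (k+1) + real (l+1)) = fact (k + l + 1)"
      using Gamma_fact[of "k+l+1"] by (simp add: add.commute add.left_commute)
    ultimately show ?thesis by (simp add: Beta_def)
  qed
  ultimately have "((\<lambda>t. t powr (real (k+1) - 1) * (1 - t) powr (real (l+1) - 1)) has_integral
          (fact k * fact l / fact (k + l + 1))) {0..1}" by simp
  then show ?thesis
    by (rule has_integral_eq[rotated]) (use assms in \<open>auto simp: powr_nat_eq\<close>)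
qed

lemma deriv_poly_fun: "deriv (poly p) = poly (pderiv p)"
  by (rule ext, rule DERIV_imp_deriv) simp

lemma funpow_deriv_poly: "(deriv ^^ k) (poly p) = poly ((pderiv ^^ k) p)"
  by (induction k) (auto simp: deriv_poly_fun)

lemma cont_poly: "continuous_on S (poly (p :: real poly))"
  by (simp add: continuous_at_imp_continuous_on poly_isCont)

lemma fpoly_poly: "fpoly m n = poly ((smult (constA n) (monom 1 n * [:1, -1:])) ^ m)"
  by (rule ext) (simp add: fpoly_def poly_monom algebra_simps)

lemma cont_derivs: "continuous_on S ((deriv ^^ k) (fpoly m n))"
  unfolding fpoly_poly funpow_deriv_poly by (rule cont_poly)

lemma constA_pos: "constA n > 0"
  by (cases n) (auto simp: constA_def)

lemma fpoly_nonneg: "0 \<le> t \<Longrightarrow> t \<le> (1::real) \<Longrightarrow> fpoly m n t \<ge> 0"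
  unfolding fpoly_def using constA_pos[of n] by simp

lemma norm1_val:
  assumes "m \<ge> 1" "n \<ge> 1"
  shows "norm1_f m n = constA n ^ m * (fact (m*n) * fact m / fact (m*n + m + 1))"
proof -
  have "((\<lambda>t::real. t ^ (m*n) * (1 - t) ^ m) has_integral
           (fact (m*n) * fact m / fact (m*n + m + 1))) {0..1}"
    by (rule beta_int) (use assms in auto)
  then have "((\<lambda>t::real. constA n ^ m * (t ^ (m*n) * (1 - t) ^ m)) has_integral
           constA n ^ m * (fact (m*n) * fact m / fact (m*n + m + 1))) {0..1}"
    by (rule has_integral_mult_right)
  note hI = this
  have e: "\<And>x::real. (x^m)^n = (x^n)^m" by (metis power_mult mult.commute)
  have "((\<lambda>t. \<bar>fpoly m n t\<bar>) has_integral
           constA n ^ m * (fact (m*n) * fact m / fact (m*n + m + 1))) {0..1}"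
    using hI by (rule has_integral_eq[rotated])
       (auto simp: fpoly_nonneg abs_of_nonneg, simp add: fpoly_def power_mult_distrib power_mult mult.commute e)
  then show ?thesis unfolding norm1_f_def by (rule integral_unique)
qed

lemma cauchy_schwarz_int:
  fixes g h :: "real \<Rightarrow> real"
  assumes "continuous_on {0..1} g" "continuous_on {0..1} h"
  shows "integral {0..1} (\<lambda>t. g t * h t) \<le>
     sqrt (integral {0..1} (\<lambda>t. g t ^ 2)) * sqrt (integral {0..1} (\<lambda>t. h t ^ 2))"
proof -
  define G where "G = integral {0..1} (\<lambda>t. g t ^ 2)"
  define H where "H = integral {0..1} (\<lambda>t. h t ^ 2)"
  define I where "I = integral {0..1} (\<lambda>t. g t * h t)"
  have ig: "(\<lambda>t. g t ^ 2) integrable_on {0..1}"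
    by (intro integrable_continuous_real continuous_intros assms)
  have ih: "(\<lambda>t. h t ^ 2) integrable_on {0..1}"
    by (intro integrable_continuous_real continuous_intros assms)
  have igh: "(\<lambda>t. g t * h t) integrable_on {0..1}"
    by (intro integrable_continuous_real continuous_intros assms)
  have G0: "G \<ge> 0" unfolding G_def by (rule integral_nonneg[OF ig]) auto
  have H0: "H \<ge> 0" unfolding H_def by (rule integral_nonneg[OF ih]) auto
  have quad: "0 \<le> a^2 * G - 2 * a * I + H" for a :: real
  proof -
    have "0 \<le> integral {0..1} (\<lambda>t. (a * g t - h t) ^ 2)"
      by (rule integral_nonneg) (auto intro!: integrable_continuous_real continuous_intros assms)
    also have "(\<lambda>t. (a * g t - h t) ^ 2) = (\<lambda>t. a^2 * g t ^ 2 - 2 * a * (g t * h t) + h t ^ 2)"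
      by (rule ext) (simp add: power2_eq_square algebra_simps)
    also have "integral {0..1} \<dots> = a^2 * G - 2 * a * I + H"
    proof (rule integral_unique)
      show "((\<lambda>t. a^2 * g t ^ 2 - 2 * a * (g t * h t) + h t ^ 2) has_integral a^2 * G - 2 * a * I + H) {0..1}"
        using ig ih igh unfolding G_def H_def I_def
        by (intro has_integral_add has_integral_diff has_integral_mult_right integrable_integral)
    qed
    finally show ?thesis .
  qed
  have "I^2 \<le> G * H"
  proof (cases "G = 0")
    case True
    have "I = 0"
    proof (rule ccontr)
      assume "I \<noteq> 0"
      have "0 \<le> ((H+1)/I)^2 * G - 2*((H+1)/I)*I + H" by (rule quad)
      also have "\<dots> = H - 2*(H+1)" using True \<open>I \<noteq> 0\<close> by simp
      finally show False using H0 by simp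
    qed
    then show ?thesis using G0 H0 by simp
  next
    case False
    then have Gp: "G > 0" using G0 by simp
    have "0 \<le> (I/G)^2 * G - 2 * (I/G) * I + H" by (rule quad)
    also have "\<dots> = H - I^2 / G" using Gp by (simp add: power2_eq_square field_simps)
    finally show ?thesis using Gp by (simp add: field_simps)
  qed
  then have "sqrt (I^2) \<le> sqrt (G * H)" by (rule real_sqrt_le_mono)
  then have "I \<le> sqrt G * sqrt H" by (simp add: real_sqrt_mult)
  then show ?thesis unfolding G_def H_def I_def .
qed


lemma weight_bounds:
  fixes u w :: "real \<Rightarrow> real"
  assumes "continuous_on {0..1} u" "continuous_on {0..1} w"
    "\<And>t. t \<in> {0..1} \<Longrightarrow> 1 \<le> w t \<and> w t \<le> c"
  shows "integral {0..1} (\<lambda>t. \<bar>u t\<bar>) \<le> integral {0..1} (\<lambda>t. w t * \<bar>u t\<bar>)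
     \<and> integral {0..1} (\<lambda>t. w t * \<bar>u t\<bar>) \<le> c * integral {0..1} (\<lambda>t. \<bar>u t\<bar>)"
proof -
  have i1: "(\<lambda>t. \<bar>u t\<bar>) integrable_on {0..1}"
    by (intro integrable_continuous_real continuous_intros assms)
  have i2: "(\<lambda>t. w t * \<bar>u t\<bar>) integrable_on {0..1}"
    by (intro integrable_continuous_real continuous_intros assms)
  have i3: "((\<lambda>t. c * \<bar>u t\<bar>) has_integral c * integral {0..1} (\<lambda>t. \<bar>u t\<bar>)) {0..1}"
    by (intro has_integral_mult_right integrable_integral i1)
  have "integral {0..1} (\<lambda>t. \<bar>u t\<bar>) \<le> integral {0..1} (\<lambda>t. w t * \<bar>u t\<bar>)"
  proof (rule integral_le[OF i1 i2])
    fix t assume "t \<in> {0..1::real}"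
    then have "1 \<le> w t" using assms(3) by blast
    then show "\<bar>u t\<bar> \<le> w t * \<bar>u t\<bar>" using mult_right_mono[of 1 "w t" "\<bar>u t\<bar>"] by simp
  qed
  moreover have "integral {0..1} (\<lambda>t. w t * \<bar>u t\<bar>) \<le> integral {0..1} (\<lambda>t. c * \<bar>u t\<bar>)"
  proof (rule integral_le[OF i2])
    show "(\<lambda>t. c * \<bar>u t\<bar>) integrable_on {0..1}" using i3 by blast
    fix t assume "t \<in> {0..1::real}"
    then have "w t \<le> c" using assms(3) by blast
    then show "w t * \<bar>u t\<bar> \<le> c * \<bar>u t\<bar>" by (simp add: mult_right_mono)
  qed
  moreover have "integral {0..1} (\<lambda>t. c * \<bar>u t\<bar>) = c * integral {0..1} (\<lambda>t. \<bar>u t\<bar>)"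
    using i3 by (rule integral_unique)
  ultimately show ?thesis by simp
qed

lemma AB_one:
  assumes "n \<ge> 1"
  shows "constA n * constB n ^ n * (1 - constB n) = 1"
proof -
  have n0: "real n > 0" using assms by simp
  have "constB n ^ n = real n ^ n / real (n+1) ^ n" by (simp add: constB_def power_divide)
  moreover have "1 - constB n = 1 / real (n+1)" by (simp add: constB_def field_simps)
  moreover have "constA n * (real n ^ n / real (n+1) ^ n) * (1 / real (n+1)) = 1"
  proof -
    have p1: "real n ^ n > 0" using n0 by simp
    have p2: "real (n+1) ^ n > 0" by simp
    have "constA n * (real n ^ n / real (n+1) ^ n) * (1 / real (n+1))
        = (real (n+1) ^ n * real (n+1)) * real n ^ n / (real n ^ n * (real (n+1) ^ n * real (n+1)))"
      using assms by (simp add: constA_def)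
    also have "\<dots> = 1" using p1 p2 by (simp del: of_nat_Suc; auto)
    finally show ?thesis .
  qed
  ultimately show ?thesis by (simp only:)
qed

lemma int_abs_deriv:
  assumes "m \<ge> 1" "n \<ge> 1"
  shows "((\<lambda>t. \<bar>deriv (fpoly m n) t\<bar>) has_integral 2) {0..1}"
proof -
  define A where "A = constA n"
  define B where "B = constB n"
  define g where "g = (\<lambda>t::real. A * t ^ n * (1 - t))"
  define D where "D = (\<lambda>t::real. real m * g t ^ (m - 1) * (A * t ^ (n - 1) * (real n - real (n+1) * t)))"
  have Apos: "A > 0" unfolding A_def by (rule constA_pos)
  have f_eq: "fpoly m n = (\<lambda>t. g t ^ m)" unfolding g_def A_def fpoly_def by simp
  have hd: "(fpoly m n has_real_derivative D t) (at t)" for t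
  proof -
    have "((\<lambda>t. g t ^ m) has_real_derivative
        real m * g t ^ (m - 1) * (A * (real n * t ^ (n - 1) * (1 - t) + t ^ n * (- 1)))) (at t)"
      unfolding g_def by (auto intro!: derivative_eq_intros simp: algebra_simps)
    moreover have "t ^ n = t ^ (n - 1) * t" using assms by (metis power_minus_mult less_le_trans zero_less_one)
    ultimately show ?thesis unfolding f_eq D_def by (simp add: algebra_simps)
  qed
  have dv: "deriv (fpoly m n) = D" by (rule ext, rule DERIV_imp_deriv, rule hd)
  have g0: "t \<in> {0..1} \<Longrightarrow> g t \<ge> 0" for t unfolding g_def using Apos by simp
  have B01: "0 \<le> B" "B \<le> 1" unfolding B_def constB_def by auto
  have fB: "fpoly m n B = 1" using AB_one[OF assms(2)] unfolding fpoly_def A_def B_def by simp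
  have f0: "fpoly m n 0 = 0" using assms unfolding fpoly_def by simp
  have f1: "fpoly m n 1 = 0" using assms unfolding fpoly_def by simp
  have vd: "(fpoly m n has_vector_derivative D t) (at t within S)" for t S
    using hd[of t] by (simp add: has_real_derivative_iff_has_vector_derivative has_vector_derivative_at_within)
  have I1: "(D has_integral 1) {0..B}"
    using fundamental_theorem_of_calculus[OF B01(1), of "fpoly m n" D] vd fB f0 by simp
  have I2: "((\<lambda>t. - D t) has_integral 1) {B..1}"
    using has_integral_neg[OF fundamental_theorem_of_calculus[OF B01(2), of "fpoly m n" D]] vd fB f1 by simp
  have J1: "((\<lambda>t. \<bar>D t\<bar>) has_integral 1) {0..B}"
  proof (rule has_integral_eq[OF _ I1])
    fix t assume t: "t \<in> {0..B}"
    then have "real (n+1) * t \<le> real n" unfolding B_def constB_def by (simp add: field_simps)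
    moreover have "g t \<ge> 0" using t B01 by (intro g0) auto
    ultimately have "D t \<ge> 0" unfolding D_def using t Apos by simp
    then show "D t = \<bar>D t\<bar>" by simp
  qed
  have J2: "((\<lambda>t. \<bar>D t\<bar>) has_integral 1) {B..1}"
  proof (rule has_integral_eq[OF _ I2])
    fix t assume t: "t \<in> {B..1}"
    then have "real (n+1) * t \<ge> real n" unfolding B_def constB_def by (simp add: field_simps)
    moreover have "g t \<ge> 0" using t B01 by (intro g0) auto
    ultimately have "D t \<le> 0" unfolding D_def using t Apos B01
      by (simp add: mult_nonneg_nonpos)
    then show "- D t = \<bar>D t\<bar>" by simp
  qed
  have "((\<lambda>t. \<bar>D t\<bar>) has_integral 1 + 1) {0..1}"
    by (rule has_integral_combine[OF B01 J1 J2])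
  then show ?thesis unfolding dv by simp
qed

lemma int_weight_sq:
  assumes "\<delta> > 0"
  shows "integral {0..1} (\<lambda>t::real. ((1 + \<delta> * t) ^ (1 + m)) ^ 2)
        = ((1 + \<delta>) ^ (2 * m + 3) - 1) / (\<delta> * real (2 * m + 3))"
proof -
  define P where "P = (\<lambda>t::real. (1 + \<delta> * t) ^ (2*m+3) / (\<delta> * real (2*m+3)))"
  have "(P has_real_derivative ((1 + \<delta> * t) ^ (2*m+2))) (at t)" for t
  proof -
    have "(P has_real_derivative (real (2*m+3) * (1 + \<delta> * t) ^ (2*m+2) * \<delta>) / (\<delta> * real (2*m+3))) (at t)"
      unfolding P_def by (auto intro!: derivative_eq_intros)
    then show ?thesis using assms by simp
  qed
  then have "((\<lambda>t. (1 + \<delta> * t) ^ (2*m+2)) has_integral P 1 - P 0) {0..1}"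
    by (intro fundamental_theorem_of_calculus)
       (auto simp: has_real_derivative_iff_has_vector_derivative[symmetric] intro: has_field_derivative_at_within)
  moreover have "P 1 - P 0 = ((1 + \<delta>) ^ (2 * m + 3) - 1) / (\<delta> * real (2 * m + 3))"
    unfolding P_def by (simp add: diff_divide_distrib)
  moreover have "\<And>t. ((1 + \<delta> * t) ^ (1 + m)) ^ 2 = (1 + \<delta> * t) ^ (2*m+2)"
  proof -
    have e: "(1+m)*2 = 2*m+2" by simp
    show "\<And>t. ((1 + \<delta> * t) ^ (1 + m)) ^ 2 = (1 + \<delta> * t) ^ (2*m+2)"
      by (simp only: power_mult[symmetric] e)
  qed
  ultimately show ?thesis by (simp add: integral_unique)
qed

theorem lemma3:
  fixes m n :: nat and \<delta> :: real
  assumes "m \<ge> 2" and "n \<ge> 1" and "0 < \<delta>" and "\<delta> \<le> 10 powr (-6)"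
  shows "1 \<le> Fk 0 m n \<delta> \<and> Fk 0 m n \<delta> \<le> 1 + \<delta>
      \<and> lambda0 m n \<delta> \<le> Fk 1 m n \<delta> \<and> Fk 1 m n \<delta> \<le> lambda1 m n \<delta>
      \<and> Fk m m n \<delta> \<le> lambdaM m n \<delta>"
proof -
  have m1: "m \<ge> 1" using assms(1) by simp
  define A where "A = constA n"
  define C where "C = fact (m * n + m + 1) / (fact m * fact (m * n) :: real)"
  have Apos: "A > 0" unfolding A_def by (rule constA_pos)
  have Cpos: "C > 0" unfolding C_def by (intro divide_pos_pos mult_pos_pos fact_gt_zero)
  define N where "N = norm1_f m n"
  have N_eq: "N = A ^ m / C"
    unfolding N_def A_def C_def norm1_val[OF m1 assms(2)] by (simp add: field_simps)
  have Npos: "N > 0" using Apos Cpos N_eq by simp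
  have invN: "1 / N = C / A ^ m" using N_eq Apos Cpos by simp
  have wpos: "t \<in> {0..1} \<Longrightarrow> 1 \<le> (1 + \<delta> * t) ^ k \<and> (1 + \<delta> * t) ^ k \<le> (1 + \<delta>) ^ k" for t :: real and k
    using assms(3) by (auto intro!: one_le_power power_mono simp: mult_left_le)
  have wc: "continuous_on {0..1} (\<lambda>t::real. (1 + \<delta> * t) ^ k)" for k
    by (intro continuous_intros)
  have F0: "1 \<le> Fk 0 m n \<delta> \<and> Fk 0 m n \<delta> \<le> 1 + \<delta>"
  proof -
    have b: "N \<le> integral {0..1} (\<lambda>t. (1 + \<delta> * t) ^ (1 + 0) * \<bar>(deriv ^^ 0) (fpoly m n) t\<bar>)
       \<and> integral {0..1} (\<lambda>t. (1 + \<delta> * t) ^ (1 + 0) * \<bar>(deriv ^^ 0) (fpoly m n) t\<bar>) \<le> (1 + \<delta>) * N"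
      unfolding N_def norm1_f_def
      using weight_bounds[OF cont_derivs[of "{0..1}" 0 m n] wc[of "1+0"] wpos[of _ "1+0"]] by simp
    then show ?thesis using Npos unfolding Fk_def N_def by (simp add: field_simps)
  qed
  have l0: "lambda0 m n \<delta> = 2 / N"
  proof -
    have "constB n ^ n - constB n ^ (n + 1) = 1 / A"
      using AB_one[OF assms(2)] Apos unfolding A_def by (simp add: field_simps)
    then have "lambda0 m n \<delta> = 2 * (1 / A) ^ m * C" unfolding lambda0_def C_def by simp
    then show ?thesis using invN by (simp add: power_one_over)
  qed
  have l1: "lambda1 m n \<delta> = (1 + \<delta>) ^ 2 * lambda0 m n \<delta>"
    unfolding lambda1_def lambda0_def by simp
  have F1: "lambda0 m n \<delta> \<le> Fk 1 m n \<delta> \<and> Fk 1 m n \<delta> \<le> lambda1 m n \<delta>"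
  proof -
    have i2: "integral {0..1} (\<lambda>t. \<bar>(deriv ^^ 1) (fpoly m n) t\<bar>) = 2"
      using int_abs_deriv[OF m1 assms(2)] by (simp add: integral_unique)
    have b: "2 \<le> integral {0..1} (\<lambda>t. (1 + \<delta> * t) ^ (1 + 1) * \<bar>(deriv ^^ 1) (fpoly m n) t\<bar>)
       \<and> integral {0..1} (\<lambda>t. (1 + \<delta> * t) ^ (1 + 1) * \<bar>(deriv ^^ 1) (fpoly m n) t\<bar>) \<le> (1 + \<delta>) ^ 2 * 2"
      using weight_bounds[OF cont_derivs[of "{0..1}" 1 m n] wc[of "1+1"] wpos[of _ "1+1"]] i2 by (simp add: power2_eq_square)
    show ?thesis using b Npos unfolding Fk_def l1 l0 N_def[symmetric]
      by (auto simp: field_simps)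
  qed
  have Fm: "Fk m m n \<delta> \<le> lambdaM m n \<delta>"
  proof -
    define h where "h = (deriv ^^ m) (fpoly m n)"
    have ch: "continuous_on {0..1} (\<lambda>t. \<bar>h t\<bar>)"
      unfolding h_def by (intro continuous_intros cont_derivs)
    have cs: "integral {0..1} (\<lambda>t. (1 + \<delta> * t) ^ (1 + m) * \<bar>h t\<bar>) \<le>
       sqrt (integral {0..1} (\<lambda>t. ((1 + \<delta> * t) ^ (1 + m)) ^ 2)) * sqrt (integral {0..1} (\<lambda>t. \<bar>h t\<bar> ^ 2))"
      using cauchy_schwarz_int[OF wc[of "1+m"] ch] by simp
    have "Fk m m n \<delta> = C / A ^ m * integral {0..1} (\<lambda>t. (1 + \<delta> * t) ^ (1 + m) * \<bar>h t\<bar>)"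
      unfolding Fk_def h_def N_def[symmetric] invN ..
    also have "\<dots> \<le> C / A ^ m * (sqrt (((1 + \<delta>) ^ (2 * m + 3) - 1) / (\<delta> * real (2 * m + 3))) * norm2_fm m n)"
      using cs Cpos Apos unfolding int_weight_sq[OF assms(3)] norm2_fm_def h_def
      by (intro mult_left_mono) auto
    also have "\<dots> = lambdaM m n \<delta>" unfolding lambdaM_def C_def A_def by (simp add: field_simps)
    finally show ?thesis .
  qed
  show ?thesis using F0 F1 Fm by blast
qed

end
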